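(* Consider the following linear closed-loop model of a lossless modular multilevel converter (MMC) interconnecting an AC network and a DC network. The MMC's total internal energy $W_t$ satisfies $$\tfrac{d}{dt} W_t = P_{\mathrm{dc}} - P_{\mathrm{ac}},$$ where $P_{\mathrm{dc}}$ is the power flowing from the DC network into the MMC and $P_{\mathrm{ac}}$ is the power flowing out of the MMC into the AC network. Write $\Delta W_t = W_t - W_t^\star$ for a constant energy setpoint $W_t^\star$. The MMC AC voltage angle $\theta$ satisfies $\tfrac{d}{dt}\theta = \omega$, and the MMC AC frequency $\omega$ and DC terminal voltage $V^{\mathrm{dc}}_t$ are determined by one of the following two controls (with constant setpoints $\omega^\star$, $V^{\mathrm{dc}\star}_t$, and power setpoints $P^\star_{\mathrm{ac}}=P^\star_{\mathrm{dc}}=0$): (i) hybrid power/energy droop control (unfiltered): $$\omega = \omega^\star + k_p^{\mathrm{ac}}(P^\star_{\mathrm{ac}} - P_{\mathrm{ac}}) + k_w^{\mathrm{ac}}\Delta W_t,\qquad V^{\mathrm{dc}}_t = V^{\mathrm{dc}\star}_t + k_p^{\mathrm{dc}}(P_{\mathrm{dc}} - P^\star_{\mathrm{dc}}) + k_w^{\mathrm{dc}}\Delta W_t,$$ with $k_w^{\mathrm{ac}} > k_p^{\mathrm{ac}}$; (ii) energy-balancing control with ideal proportional-derivative action: $$\omega = \omega^\star + k_p^{\mathrm{ac}}\tfrac{d}{dt}\Delta W_t + k_w^{\mathrm{ac}}\Delta W_t,\qquad V^{\mathrm{dc}}_t = V^{\mathrm{dc}\star}_t + k_p^{\mathrm{dc}}\tfrac{d}{dt}\Delta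 W_t + k_w^{\mathrm{dc}}\Delta W_t.$$ In both cases $k_p^{\mathrm{ac}}, k_p^{\mathrm{dc}}, k_w^{\mathrm{ac}}, k_w^{\mathrm{dc}} > 0$. The linearized AC network (when connected) is $P_{\mathrm{ac}} = b_{\mathrm{ac}}(\theta - \theta_{\mathrm{ac}})$, $\tfrac{d}{dt}\theta_{\mathrm{ac}} = \omega^\star + k_{\mathrm{ac}} P_{\mathrm{ac}}$, with susceptance $b_{\mathrm{ac}}>0$ and AC source droop coefficient $k_{\mathrm{ac}}\ge 0$; when the AC network is disconnected, $P_{\mathrm{ac}}\equiv 0$. The linearized DC network (when connected) is $P_{\mathrm{dc}} = g_{\mathrm{dc}}(V_{\mathrm{dc}} - V^{\mathrm{dc}}_t)$, $V_{\mathrm{dc}} = V^{\mathrm{dc}\star}_t - k_{\mathrm{dc}}P_{\mathrm{dc}}$, with conductance $g_{\mathrm{dc}}>0$ and DC source droop coefficient $k_{\mathrm{dc}}\ge 0$; when the DC network is disconnected, $P_{\mathrm{dc}}\equiv 0$. Then, for either control (i) or (ii), and whether the MMC is connected (a) only to the AC network, (b) only to the DC network, or (c) to both networks, the resulting linear closed-loop system (in the state $\Delta W_t$ together with, when the AC network is connected, the angle difference $\theta-\theta_{\mathrm{ac}}$) has an asymptotically stable equilibrium at the origin; in particular $W_t \to W_t^\star$, $\omega\to\omega^\star$ and $V^{\mathrm{dc}}_t \to V^{\mathrm{dc}\star}_t$ for every initial condition.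
   Context: This is a macroscopic (averaged) MMC model in which fast internal converter dynamics (current control, arm energy balancing, voltage control) are neglected, the MMC is lossless, and the network equations are linearized around the zero-power-flow operating point. The AC source is a voltage source with frequency droop and the DC source is a voltage source with power–voltage droop, each behind an equivalent line (susceptance $b_{\mathrm{ac}}$, resp. conductance $g_{\mathrm{dc}}$). "Asymptotically stable" refers to the equilibrium of the linear time-invariant closed-loop ODE. *)

theory Defs
  imports Complex_Main
begin

datatype control = HybridDroop | EnergyPD
datatype config = AC_only | DC_only | AC_and_DC

definition ac_connected :: "config \<Rightarrow> bool" where
  "ac_connected c \<longleftrightarrow> c \<noteq> DC_only"
definition dc_connected :: "config \<Rightarrow> bool" where
  "dc_connected c \<longleftrightarrow> c \<noteq> AC_only"

record mmc_params =
  kp_ac :: real  kp_dc :: real  kw_ac :: real  kw_dc :: real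
  b_ac :: real  k_ac :: real  g_dc :: real  k_dc :: real
  W_star :: real  omega_star :: real  Vdc_star :: real

text \<open>Signals of the closed loop: total energy W, its time derivative dW, MMC angle,
  AC source angle, MMC frequency, MMC DC terminal voltage V_t, AC power, DC power,
  DC source voltage.\<close>
record mmc_signals =
  sW :: "real \<Rightarrow> real"  sdW :: "real \<Rightarrow> real"
  stheta :: "real \<Rightarrow> real"  stheta_ac :: "real \<Rightarrow> real"
  somega :: "real \<Rightarrow> real"  sVt :: "real \<Rightarrow> real"
  sPac :: "real \<Rightarrow> real"  sPdc :: "real \<Rightarrow> real"  sVdc :: "real \<Rightarrow> real"

definition closed_loop :: "control \<Rightarrow> config \<Rightarrow> mmc_params \<Rightarrow> mmc_signals \<Rightarrow> bool" where
  "closed_loop u c p s \<longleftrightarrow> (\<forall>t\<ge>0.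
      \<comment> \<open>energy dynamics\<close>
      (sW s has_real_derivative sdW s t) (at t within {0..}) \<and>
      sdW s t = sPdc s t - sPac s t \<and>
      \<comment> \<open>MMC angle\<close>
      (stheta s has_real_derivative somega s t) (at t within {0..}) \<and>
      \<comment> \<open>control law\<close>
      (case u of
         HybridDroop \<Rightarrow>
           somega s t = omega_star p + kp_ac p * (0 - sPac s t) + kw_ac p * (sW s t - W_star p) \<and>
           sVt s t = Vdc_star p + kp_dc p * (sPdc s t - 0) + kw_dc p * (sW s t - W_star p)
       | EnergyPD \<Rightarrow>
           somega s t = omega_star p + kp_ac p * sdW s t + kw_ac p * (sW s t - W_star p) \<and>
           sVt s t = Vdc_star p + kp_dc p * sdW s t + kw_dc p * (sW s t - W_star p)) \<and>
      \<comment> \<open>AC network\<close>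
      (if ac_connected c then
         sPac s t = b_ac p * (stheta s t - stheta_ac s t) \<and>
         (stheta_ac s has_real_derivative (omega_star p + k_ac p * sPac s t)) (at t within {0..})
       else sPac s t = 0) \<and>
      \<comment> \<open>DC network\<close>
      (if dc_connected c then
         sPdc s t = g_dc p * (sVdc s t - sVt s t) \<and>
         sVdc s t = Vdc_star p - k_dc p * sPdc s t
       else sPdc s t = 0))"

definition state_x :: "mmc_params \<Rightarrow> mmc_signals \<Rightarrow> real \<Rightarrow> real" where
  "state_x p s t = sW s t - W_star p"
definition state_d :: "config \<Rightarrow> mmc_signals \<Rightarrow> real \<Rightarrow> real" where
  "state_d c s t = (if ac_connected c then stheta s t - stheta_ac s t else 0)"
definition state_norm :: "config \<Rightarrow> mmc_params \<Rightarrow> mmc_signals \<Rightarrow> real \<Rightarrow> real" where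
  "state_norm c p s t = \<bar>state_x p s t\<bar> + \<bar>state_d c s t\<bar>"

definition asymptotically_stable :: "control \<Rightarrow> config \<Rightarrow> mmc_params \<Rightarrow> bool" where
  "asymptotically_stable u c p \<longleftrightarrow>
     (\<forall>x0 d0. \<exists>s. closed_loop u c p s \<and> state_x p s 0 = x0 \<and>
                  state_d c s 0 = (if ac_connected c then d0 else 0)) \<and>
     (\<forall>\<epsilon>>0. \<exists>\<delta>>0. \<forall>s. closed_loop u c p s \<longrightarrow> state_norm c p s 0 < \<delta> \<longrightarrow>
                     (\<forall>t\<ge>0. state_norm c p s t < \<epsilon>)) \<and>
     (\<forall>s. closed_loop u c p s \<longrightarrow> (state_norm c p s \<longlongrightarrow> 0) at_top)"

end

theory Submission
  imports Defs
begin

lemma CS_exists: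
  fixes q :: real
  shows "\<exists>C S. C 0 = 1 \<and> S 0 = 0 \<and> (\<forall>t. (C has_real_derivative q * S t) (at t) \<and> (S has_real_derivative C t) (at t))"
proof (cases "q > 0")
  case True
  define r where "r = sqrt q"
  have r: "r > 0" "r * r = q" using True by (auto simp: r_def)
  show ?thesis
  proof (intro exI conjI allI)
    fix t
    show "((\<lambda>t. cosh (r*t)) has_real_derivative q * (sinh (r*t) / r)) (at t)"
      using r by (auto intro!: derivative_eq_intros simp: field_simps)
    show "((\<lambda>t. sinh (r*t)/r) has_real_derivative cosh (r*t)) (at t)"
      using r by (auto intro!: derivative_eq_intros simp: field_simps)
  qed auto
next
  case False
  show ?thesis
  proof (cases "q < 0")
    case True
    define r where "r = sqrt (-q)"
    have r: "r > 0" "q = -(r * r)" using True by (auto simp: r_def)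
    show ?thesis
    proof (intro exI conjI allI)
      fix t
      show "((\<lambda>t. cos (r*t)) has_real_derivative q * (sin (r*t) / r)) (at t)"
        using r by (auto intro!: derivative_eq_intros simp: field_simps)
      show "((\<lambda>t. sin (r*t)/r) has_real_derivative cos (r*t)) (at t)"
        using r by (auto intro!: derivative_eq_intros simp: field_simps)
    qed auto
  next
    case False
    with \<open>\<not> q > 0\<close> have "q = 0" by simp
    show ?thesis
    proof (intro exI conjI allI)
      fix t
      show "((\<lambda>t. 1) has_real_derivative q * t) (at t)"
        using \<open>q = 0\<close> by (auto intro!: derivative_eq_intros)
      show "((\<lambda>t. t) has_real_derivative 1) (at t)"
        by (auto intro!: derivative_eq_intros)
    qed auto
  qed
qed

lemma lin2_exists:
  fixes a11 a12 a21 a22 x0 y0 :: real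
  shows "\<exists>x y. x 0 = x0 \<and> y 0 = y0 \<and> (\<forall>t. (x has_real_derivative (a11 * x t + a12 * y t)) (at t) \<and>
            (y has_real_derivative (a21 * x t + a22 * y t)) (at t))"
proof -
  define h where "h = (a11 - a22) / 2"
  define T where "T = a11 + a22"
  define q where "q = h*h + a12*a21"
  obtain C S where CS: "C 0 = 1" "S 0 = 0" "\<And>t. (C has_real_derivative q * S t) (at t)"
    "\<And>t. (S has_real_derivative C t) (at t)" using CS_exists[of q] by blast
  define x where "x t = exp (T/2*t) * (C t * x0 + S t * (h*x0 + a12*y0))" for t
  define y where "y t = exp (T/2*t) * (C t * y0 + S t * (a21*x0 - h*y0))" for t
  show ?thesis
  proof (intro exI conjI allI)
    fix t
    have "(x has_real_derivative T/2 * x t + exp (T/2*t) * (q * S t * x0 + C t * (h*x0 + a12*y0))) (at t)"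
      unfolding x_def[abs_def] by (auto intro!: derivative_eq_intros CS(3,4) simp: algebra_simps)
    moreover have "T/2 * x t + exp (T/2*t) * (q * S t * x0 + C t * (h*x0 + a12*y0)) = a11 * x t + a12 * y t"
      unfolding x_def y_def q_def h_def T_def by (simp add: field_simps; simp add: algebra_simps)
    ultimately show "(x has_real_derivative (a11 * x t + a12 * y t)) (at t)" by simp
    have "(y has_real_derivative T/2 * y t + exp (T/2*t) * (q * S t * y0 + C t * (a21*x0 - h*y0))) (at t)"
      unfolding y_def[abs_def] by (auto intro!: derivative_eq_intros CS(3,4) simp: algebra_simps)
    moreover have "T/2 * y t + exp (T/2*t) * (q * S t * y0 + C t * (a21*x0 - h*y0)) = a21 * x t + a22 * y t"
      unfolding x_def y_def q_def h_def T_def by (simp add: field_simps; simp add: algebra_simps)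
    ultimately show "(y has_real_derivative (a21 * x t + a22 * y t)) (at t)" by simp
  qed (simp_all add: x_def y_def CS)
qed

lemma within_to_at:
  assumes "(f has_real_derivative f') (at t within {0..})" "t > 0"
  shows "(f has_real_derivative f') (at t)"
proof -
  have "(f has_real_derivative f') (at t within {0<..})"
    using assms(1) by (rule DERIV_subset) auto
  thus ?thesis using assms(2) by (simp add: at_within_open[of t "{0<..}"])
qed

lemma decay_mono:
  fixes g :: "real \<Rightarrow> real"
  assumes "\<And>t. t \<ge> 0 \<Longrightarrow> (g has_real_derivative g' t) (at t within {0..})"
    and "\<And>t. t \<ge> 0 \<Longrightarrow> g' t \<le> 0" and "t \<ge> 0"
  shows "g t \<le> g 0"
proof (rule DERIV_nonpos_imp_decreasing_open[OF assms(3)])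
  fix x assume "0 < x" "x < t"
  thus "\<exists>y. (g has_real_derivative y) (at x) \<and> y \<le> 0"
    using assms within_to_at by (intro exI[of _ "g' x"]) auto
next
  show "continuous_on {0..t} g"
    by (rule continuous_on_subset[OF DERIV_continuous_on[of "{0..}" g g']]) (use assms in auto)
qed

lemma psd2:
  fixes a b c x y :: real
  assumes "a > 0" "a * c \<ge> b^2"
  shows "a*x^2 + 2*b*x*y + c*y^2 \<ge> 0"
proof -
  have "a*(a*x^2 + 2*b*x*y + c*y^2) = (a*x + b*y)^2 + (a*c - b^2)*y^2"
    by (simp add: power2_eq_square algebra_simps)
  also have "\<dots> \<ge> 0" using assms by auto
  finally show ?thesis using assms(1) by (simp add: zero_le_mult_iff)
qed

lemma lin2_decay:
  fixes a11 a12 a21 a22 :: real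
  assumes T: "a11 + a22 < 0" and D: "a11*a22 - a12*a21 > 0"
  shows "\<exists>K c. K > 0 \<and> c > 0 \<and> (\<forall>x y. (\<forall>t\<ge>0. (x has_real_derivative (a11 * x t + a12 * y t)) (at t within {0..}) \<and>
            (y has_real_derivative (a21 * x t + a22 * y t)) (at t within {0..})) \<longrightarrow>
         (\<forall>t\<ge>0. (x t)^2 + (y t)^2 \<le> K * ((x 0)^2 + (y 0)^2) * exp (-c*t)))"
proof -
  define DD where "DD = a11*a22 - a12*a21"
  define TT where "TT = a11 + a22"
  define p1 where "p1 = DD + a21^2 + a22^2"
  define p2 where "p2 = -(a12*a22 + a11*a21)"
  define p3 where "p3 = DD + a11^2 + a12^2"
  define W where "W x y = p1*x^2 + 2*p2*x*y + p3*y^2" for x y :: real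
  define \<kappa> where "\<kappa> = -2*TT*DD"
  define M where "M = p1 + p3 + 2*\<bar>p2\<bar>"
  define \<mu> where "\<mu> = (p1*p3 - p2^2)/(p1+p3)"
  have DD: "DD > 0" using D by (simp add: DD_def)
  have p1: "p1 > 0" and p3: "p3 > 0" using DD by (auto simp: p1_def p3_def intro!: add_pos_nonneg)
  have det: "p1*p3 - p2^2 = 2*DD^2 + DD*(a11^2+a12^2+a21^2+a22^2)"
    unfolding p1_def p2_def p3_def DD_def by (simp add: power2_eq_square algebra_simps)
  have detpos: "p1*p3 - p2^2 > 0" unfolding det using DD by (auto intro!: add_pos_nonneg)
  have kpos: "\<kappa> > 0" using T DD by (simp add: \<kappa>_def TT_def mult_neg_pos)
  have Mpos: "M > 0" using p1 p3 by (simp add: M_def)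
  have mupos: "\<mu> > 0" using detpos p1 p3 by (simp add: \<mu>_def)
  have Wup: "W x y \<le> M * (x^2 + y^2)" for x y
  proof -
    have sq: "2*\<bar>x*y\<bar> \<le> x^2 + y^2"
    proof -
      have "0 \<le> (\<bar>x\<bar> - \<bar>y\<bar>)^2" by simp
      thus ?thesis by (simp add: power2_eq_square algebra_simps abs_mult)
    qed
    have a: "2*p2*x*y \<le> \<bar>p2\<bar> * (2*\<bar>x*y\<bar>)"
    proof -
      have "2*p2*x*y \<le> \<bar>2*p2*x*y\<bar>" by (rule abs_ge_self)
      also have "\<dots> = \<bar>p2\<bar> * (2*\<bar>x*y\<bar>)" by (simp add: abs_mult)
      finally show ?thesis .
    qed
    have b: "\<bar>p2\<bar> * (2*\<bar>x*y\<bar>) \<le> \<bar>p2\<bar> * (x^2 + y^2)"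
      using sq by (intro mult_left_mono) auto
    have c1: "p1*x^2 \<le> p1*(x^2+y^2)" using p1 by (intro mult_left_mono) auto
    have c3: "p3*y^2 \<le> p3*(x^2+y^2)" using p3 by (intro mult_left_mono) auto
    have c2: "0 \<le> \<bar>p2\<bar> * (x^2 + y^2)" by simp
    have "M * (x^2 + y^2) = p1*(x^2+y^2) + p3*(x^2+y^2) + 2*(\<bar>p2\<bar> * (x^2 + y^2))"
      unfolding M_def by (simp add: algebra_simps)
    thus ?thesis unfolding W_def using a b c1 c2 c3 by linarith
  qed
  have Wlow: "\<mu> * (x^2 + y^2) \<le> W x y" for x y
  proof -
    have "(p1 - \<mu>)*(p3 - \<mu>) - p2^2 = \<mu>^2"
    proof -
      have m: "\<mu> * (p1+p3) = p1*p3 - p2^2" using p1 p3 by (simp add: \<mu>_def)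
      have "(p1-\<mu>)*(p3-\<mu>) - p2^2 = (p1*p3 - p2^2) - \<mu>*(p1+p3) + \<mu>^2"
        by (simp add: algebra_simps power2_eq_square)
      thus ?thesis using m by simp
    qed
    hence e: "(p1 - \<mu>)*(p3 - \<mu>) \<ge> p2^2" using zero_le_power2[of \<mu>] by linarith
    have "\<mu> < p1"
    proof -
      have "p1*p3 - p2^2 \<le> p1*p3" by simp
      also have "\<dots> < p1*(p1+p3)" using p1 by simp
      finally show ?thesis using p1 p3 by (simp add: \<mu>_def divide_less_eq)
    qed
    hence "0 \<le> (p1-\<mu>)*x^2 + 2*p2*x*y + (p3-\<mu>)*y^2" using psd2[OF _ e] by simp
    thus ?thesis unfolding W_def by (simp add: algebra_simps)
  qed
  have key: "(x t)^2 + (y t)^2 \<le> M/\<mu> * ((x 0)^2 + (y 0)^2) * exp (-(\<kappa>/M)*t)"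
    if sol: "\<forall>t\<ge>0. (x has_real_derivative (a11 * x t + a12 * y t)) (at t within {0..}) \<and>
            (y has_real_derivative (a21 * x t + a22 * y t)) (at t within {0..})" and t: "t \<ge> 0"
    for x y :: "real \<Rightarrow> real" and t :: real
  proof -
    define g where "g t = W (x t) (y t) * exp (\<kappa>/M*t)" for t
    define g' where "g' t = exp (\<kappa>/M*t) * (-\<kappa>*((x t)^2 + (y t)^2) + \<kappa>/M * W (x t) (y t))" for t
    have der: "(g has_real_derivative g' s) (at s within {0..})" if "s \<ge> 0" for s
    proof -
      have dx: "(x has_real_derivative (a11 * x s + a12 * y s)) (at s within {0..})"
        and dy: "(y has_real_derivative (a21 * x s + a22 * y s)) (at s within {0..})" using sol that by auto
      have "(g has_real_derivative
         (p1*(2*x s*(a11 * x s + a12 * y s)) + 2*p2*((a11 * x s + a12 * y s)*y s + x s*(a21 * x s + a22 * y s))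
          + p3*(2*y s*(a21 * x s + a22 * y s))) * exp (\<kappa>/M*s) + W (x s) (y s) * (exp (\<kappa>/M*s) * (\<kappa>/M)))
         (at s within {0..})"
        unfolding g_def[abs_def] W_def
        by (rule derivative_eq_intros dx dy refl)+ (simp add: algebra_simps power2_eq_square)
      moreover have pid: "p1*(2*x s*(a11 * x s + a12 * y s)) + 2*p2*((a11 * x s + a12 * y s)*y s + x s*(a21 * x s + a22 * y s))
          + p3*(2*y s*(a21 * x s + a22 * y s)) = -\<kappa>*((x s)^2 + (y s)^2)"
        unfolding p1_def p2_def p3_def \<kappa>_def TT_def DD_def by (simp add: power2_eq_square algebra_simps)
      ultimately show ?thesis unfolding g'_def by (simp only: pid) (simp add: algebra_simps)
    qed
    have g'neg: "g' s \<le> 0" if "s \<ge> 0" for s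
    proof -
      have "\<kappa>/M * W (x s) (y s) \<le> \<kappa>/M * (M * ((x s)^2 + (y s)^2))"
        using Wup kpos Mpos by (intro mult_left_mono) auto
      also have "\<dots> = \<kappa>*((x s)^2 + (y s)^2)" using Mpos by simp
      finally show ?thesis unfolding g'_def by (simp add: mult_nonneg_nonpos)
    qed
    have "g t \<le> g 0" by (rule decay_mono[OF der g'neg t])
    hence "W (x t) (y t) * exp (\<kappa>/M*t) \<le> W (x 0) (y 0)" by (simp add: g_def)
    hence "W (x t) (y t) \<le> W (x 0) (y 0) * exp (-(\<kappa>/M)*t)"
      by (simp add: exp_minus field_simps)
    also have "\<dots> \<le> M * ((x 0)^2 + (y 0)^2) * exp (-(\<kappa>/M)*t)"
      using Wup by (intro mult_right_mono) auto
    finally have "\<mu> * ((x t)^2 + (y t)^2) \<le> M * ((x 0)^2 + (y 0)^2) * exp (-(\<kappa>/M)*t)"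
      using Wlow order_trans by blast
    thus ?thesis
      using mupos by (simp add: field_simps)
  qed
  show ?thesis
    apply (rule exI[of _ "M/\<mu>"], rule exI[of _ "\<kappa>/M"])
    using Mpos mupos kpos key by auto
qed

definition posp :: "mmc_params \<Rightarrow> bool" where
  "posp p \<longleftrightarrow> kp_ac p > 0 \<and> kp_dc p > 0 \<and> kw_ac p > 0 \<and> kw_dc p > 0 \<and>
     b_ac p > 0 \<and> k_ac p \<ge> 0 \<and> g_dc p > 0 \<and> k_dc p \<ge> 0"

definition GG :: "config \<Rightarrow> mmc_params \<Rightarrow> real" where
  "GG c p = (if dc_connected c then g_dc p / (1 + g_dc p * k_dc p) else 0)"
definition ee :: "config \<Rightarrow> mmc_params \<Rightarrow> real" where
  "ee c p = 1 + GG c p * kp_dc p"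
definition ah :: "config \<Rightarrow> mmc_params \<Rightarrow> real" where
  "ah c p = GG c p * kw_dc p / ee c p"
definition bd :: "control \<Rightarrow> config \<Rightarrow> mmc_params \<Rightarrow> real" where
  "bd u c p = (case u of HybridDroop \<Rightarrow> b_ac p | EnergyPD \<Rightarrow> b_ac p / ee c p)"
definition wx :: "control \<Rightarrow> config \<Rightarrow> mmc_params \<Rightarrow> real" where
  "wx u c p = (case u of HybridDroop \<Rightarrow> kw_ac p | EnergyPD \<Rightarrow> kw_ac p - kp_ac p * ah c p)"
definition wd :: "control \<Rightarrow> config \<Rightarrow> mmc_params \<Rightarrow> real" where
  "wd u c p = - kp_ac p * bd u c p"
definition vx :: "config \<Rightarrow> mmc_params \<Rightarrow> real" where
  "vx c p = kw_dc p - kp_dc p * ah c p"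
definition vd :: "control \<Rightarrow> config \<Rightarrow> mmc_params \<Rightarrow> real" where
  "vd u c p = (case u of HybridDroop \<Rightarrow> 0 | EnergyPD \<Rightarrow> - kp_dc p * bd u c p)"

lemma coef_pos:
  assumes "posp p"
  shows "GG c p \<ge> 0" "ee c p \<ge> 1" "ee c p > 0" "ah c p \<ge> 0" "bd u c p > 0" "wd u c p < 0"
    "dc_connected c \<Longrightarrow> GG c p > 0" "dc_connected c \<Longrightarrow> ah c p > 0"
proof -
  have g: "g_dc p > 0" "k_dc p \<ge> 0" "kp_dc p > 0" "kw_dc p > 0" "b_ac p > 0" "kp_ac p > 0"
    using assms by (auto simp: posp_def)
  have d: "1 + g_dc p * k_dc p > 0" using g by (smt (verit) mult_nonneg_nonneg)
  show G: "GG c p \<ge> 0" using g d by (auto simp: GG_def)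
  show e: "ee c p \<ge> 1" using G g by (simp add: ee_def)
  thus e': "ee c p > 0" by simp
  show "ah c p \<ge> 0" using G g e' by (simp add: ah_def)
  show b: "bd u c p > 0" using g e' by (cases u) (auto simp: bd_def)
  show "wd u c p < 0" using b g by (simp add: wd_def)
  assume "dc_connected c"
  thus G': "GG c p > 0" using g d by (simp add: GG_def)
  thus "ah c p > 0" using g e' by (simp add: ah_def)
qed

lemma Tneg:
  assumes "posp p"
  shows "- ah c p + (wd u c p - k_ac p * b_ac p) < 0"
proof -
  have "k_ac p * b_ac p \<ge> 0" using assms by (simp add: posp_def)
  moreover have "ah c p \<ge> 0" "wd u c p < 0" using coef_pos[OF assms] by auto
  ultimately show ?thesis by linarith
qed

lemma Dpos:
  assumes "posp p"
  shows "(- ah c p) * (wd u c p - k_ac p * b_ac p) - (- bd u c p) * wx u c p > 0"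
proof -
  have g: "k_dc p \<ge> 0" "kp_dc p > 0" "kw_dc p > 0" "b_ac p > 0" "kp_ac p > 0" "kw_ac p > 0" "k_ac p \<ge> 0"
    using assms by (auto simp: posp_def)
  have cp: "ah c p \<ge> 0" "ee c p > 0" using coef_pos[OF assms] by auto
  have kb: "k_ac p * b_ac p \<ge> 0" using g by simp
  show ?thesis
  proof (cases u)
    case HybridDroop
    have "ah c p * (kp_ac p * b_ac p + k_ac p * b_ac p) \<ge> 0" using cp g kb by simp
    moreover have "b_ac p * kw_ac p > 0" using g by simp
    ultimately show ?thesis using HybridDroop by (simp add: wd_def bd_def wx_def algebra_simps)
  next
    case EnergyPD
    have "(- ah c p) * (wd u c p - k_ac p * b_ac p) - (- bd u c p) * wx u c p
        = ah c p * (k_ac p * b_ac p) + b_ac p * kw_ac p / ee c p"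
      using EnergyPD cp by (simp add: wd_def bd_def wx_def field_simps)
    moreover have "ah c p * (k_ac p * b_ac p) \<ge> 0" using cp kb by simp
    moreover have "b_ac p * kw_ac p / ee c p > 0" using cp g by simp
    ultimately show ?thesis by linarith
  qed
qed

lemma dc_coef:
  assumes "posp p" "dc_connected c"
  shows "ah c p * (1 + g_dc p * k_dc p) = g_dc p * vx c p"
    and "(b_ac p - bd u c p) * (1 + g_dc p * k_dc p) = - g_dc p * vd u c p"
proof -
  have g: "g_dc p > 0" "k_dc p \<ge> 0" using assms by (auto simp: posp_def)
  have d: "1 + g_dc p * k_dc p > 0" using g by (smt (verit) mult_nonneg_nonneg)
  have e: "ee c p > 0" using coef_pos[OF assms(1)] by simp
  have E: "ee c p * (1 + g_dc p * k_dc p) = 1 + g_dc p * k_dc p + g_dc p * kp_dc p"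
    using assms(2) d by (simp add: ee_def GG_def field_simps)
  have A: "ah c p * ee c p = g_dc p * kw_dc p / (1 + g_dc p * k_dc p)"
    using e assms(2) by (simp add: ah_def GG_def)
  have "ah c p * (1 + g_dc p * k_dc p + g_dc p * kp_dc p) = ah c p * ee c p * (1 + g_dc p * k_dc p)"
    using E by (simp add: algebra_simps)
  also have "\<dots> = g_dc p * kw_dc p" using A d by simp
  finally show "ah c p * (1 + g_dc p * k_dc p) = g_dc p * vx c p"
    by (simp add: vx_def algebra_simps)
  show "(b_ac p - bd u c p) * (1 + g_dc p * k_dc p) = - g_dc p * vd u c p"
  proof (cases u)
    case EnergyPD
    have X: "(ee c p - 1) * (1 + g_dc p * k_dc p) = g_dc p * kp_dc p"
      using assms(2) d by (simp add: ee_def GG_def)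
    have "(b_ac p - b_ac p / ee c p) * (1 + g_dc p * k_dc p) = b_ac p * ((ee c p - 1) * (1 + g_dc p * k_dc p)) / ee c p"
      using e by (simp add: field_simps)
    also have "\<dots> = b_ac p * (g_dc p * kp_dc p) / ee c p" using X by simp
    finally show ?thesis using EnergyPD by (simp add: bd_def vd_def algebra_simps)
  qed (simp add: bd_def vd_def)
qed

definition mk :: "control \<Rightarrow> config \<Rightarrow> mmc_params \<Rightarrow> (real\<Rightarrow>real) \<Rightarrow> (real\<Rightarrow>real) \<Rightarrow> (real\<Rightarrow>real) \<Rightarrow> (real\<Rightarrow>real) \<Rightarrow> mmc_signals" where
"mk u c p x yy th tha = \<lparr>sW = \<lambda>t. W_star p + x t, sdW = \<lambda>t. -ah c p * x t - bd u c p * yy t,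
   stheta = th, stheta_ac = tha, somega = \<lambda>t. omega_star p + wx u c p * x t + wd u c p * yy t,
   sVt = \<lambda>t. Vdc_star p + vx c p * x t + vd u c p * yy t, sPac = \<lambda>t. b_ac p * yy t,
   sPdc = \<lambda>t. -ah c p * x t - bd u c p * yy t + b_ac p * yy t,
   sVdc = \<lambda>t. Vdc_star p - k_dc p * (-ah c p * x t - bd u c p * yy t + b_ac p * yy t)\<rparr>"

lemma check_cl:
  assumes P: "posp p"
  and dx: "\<And>t. (x has_real_derivative (-ah c p * x t - bd u c p * yy t)) (at t)"
  and dth: "\<And>t. (th has_real_derivative (omega_star p + wx u c p * x t + wd u c p * yy t)) (at t)"
  and ac: "\<And>t. ac_connected c \<Longrightarrow> th t - tha t = yy t"
  and dac: "\<And>t. ac_connected c \<Longrightarrow> (tha has_real_derivative (omega_star p + k_ac p * (b_ac p * yy t))) (at t)"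
  and nac: "\<And>t. \<not> ac_connected c \<Longrightarrow> yy t = 0"
  shows "closed_loop u c p (mk u c p x yy th tha)"
proof -
  have DC: "-ah c p * X - bd u c p * Y + b_ac p * Y = g_dc p * ((Vdc_star p - k_dc p * (-ah c p * X - bd u c p * Y + b_ac p * Y)) - (Vdc_star p + vx c p * X + vd u c p * Y))"
    if dc: "dc_connected c" for X Y
  proof -
    note cc = dc_coef(1)[OF P dc] dc_coef(2)[OF P dc, of u]
    have "(-ah c p * X - bd u c p * Y + b_ac p * Y) * (1 + g_dc p * k_dc p)
       = -(ah c p * (1 + g_dc p * k_dc p))*X + ((b_ac p - bd u c p) * (1 + g_dc p * k_dc p))*Y"
      by (simp add: algebra_simps)
    also have "\<dots> = -(g_dc p * vx c p)*X + (- g_dc p * vd u c p)*Y" using cc by simp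
    finally show ?thesis by (simp add: algebra_simps)
  qed
  have NDC: "ah c p = 0 \<and> bd u c p = b_ac p" if "\<not> dc_connected c"
    using that by (cases u) (simp_all add: ah_def GG_def ee_def bd_def)
  show ?thesis unfolding closed_loop_def
  proof (intro allI impI)
    fix t :: real assume "t \<ge> 0"
    have d1: "((\<lambda>t. W_star p + x t) has_real_derivative 0 + (-ah c p * x t - bd u c p * yy t)) (at t)"
      by (rule DERIV_add[OF DERIV_const dx])
    have A: "((\<lambda>t. W_star p + x t) has_real_derivative (-ah c p * x t - bd u c p * yy t)) (at t within {0..})"
      using d1 by (simp add: has_field_derivative_at_within)
    have B: "(th has_real_derivative (omega_star p + wx u c p * x t + wd u c p * yy t)) (at t within {0..})"
      using dth by (simp add: has_field_derivative_at_within)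
    have C: "ac_connected c \<Longrightarrow> (tha has_real_derivative (omega_star p + k_ac p * (b_ac p * yy t))) (at t within {0..})"
      using dac by (simp add: has_field_derivative_at_within)
    show "(sW (mk u c p x yy th tha) has_real_derivative sdW (mk u c p x yy th tha) t) (at t within {0..}) \<and>
         sdW (mk u c p x yy th tha) t = sPdc (mk u c p x yy th tha) t - sPac (mk u c p x yy th tha) t \<and>
         (stheta (mk u c p x yy th tha) has_real_derivative somega (mk u c p x yy th tha) t) (at t within {0..}) \<and>
         (case u of
          HybridDroop \<Rightarrow>
            somega (mk u c p x yy th tha) t = omega_star p + kp_ac p * (0 - sPac (mk u c p x yy th tha) t) + kw_ac p * (sW (mk u c p x yy th tha) t - W_star p) \<and>
            sVt (mk u c p x yy th tha) t = Vdc_star p + kp_dc p * (sPdc (mk u c p x yy th tha) t - 0) + kw_dc p * (sW (mk u c p x yy th tha) t - W_star p)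
          | EnergyPD \<Rightarrow>
              somega (mk u c p x yy th tha) t = omega_star p + kp_ac p * sdW (mk u c p x yy th tha) t + kw_ac p * (sW (mk u c p x yy th tha) t - W_star p) \<and>
              sVt (mk u c p x yy th tha) t = Vdc_star p + kp_dc p * sdW (mk u c p x yy th tha) t + kw_dc p * (sW (mk u c p x yy th tha) t - W_star p)) \<and>
         (if ac_connected c
          then sPac (mk u c p x yy th tha) t = b_ac p * (stheta (mk u c p x yy th tha) t - stheta_ac (mk u c p x yy th tha) t) \<and>
               (stheta_ac (mk u c p x yy th tha) has_real_derivative omega_star p + k_ac p * sPac (mk u c p x yy th tha) t) (at t within {0..})
          else sPac (mk u c p x yy th tha) t = 0) \<and>
         (if dc_connected c
          then sPdc (mk u c p x yy th tha) t = g_dc p * (sVdc (mk u c p x yy th tha) t - sVt (mk u c p x yy th tha) t) \<and>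
               sVdc (mk u c p x yy th tha) t = Vdc_star p - k_dc p * sPdc (mk u c p x yy th tha) t
          else sPdc (mk u c p x yy th tha) t = 0)"
    proof (intro conjI)
      show "(sW (mk u c p x yy th tha) has_real_derivative sdW (mk u c p x yy th tha) t) (at t within {0..})"
        using A by (simp add: mk_def)
      show "sdW (mk u c p x yy th tha) t = sPdc (mk u c p x yy th tha) t - sPac (mk u c p x yy th tha) t"
        by (simp add: mk_def)
      show "(stheta (mk u c p x yy th tha) has_real_derivative somega (mk u c p x yy th tha) t) (at t within {0..})"
        using B by (simp add: mk_def)
      show "case u of
          HybridDroop \<Rightarrow>
            somega (mk u c p x yy th tha) t = omega_star p + kp_ac p * (0 - sPac (mk u c p x yy th tha) t) + kw_ac p * (sW (mk u c p x yy th tha) t - W_star p) \<and>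
            sVt (mk u c p x yy th tha) t = Vdc_star p + kp_dc p * (sPdc (mk u c p x yy th tha) t - 0) + kw_dc p * (sW (mk u c p x yy th tha) t - W_star p)
          | EnergyPD \<Rightarrow>
              somega (mk u c p x yy th tha) t = omega_star p + kp_ac p * sdW (mk u c p x yy th tha) t + kw_ac p * (sW (mk u c p x yy th tha) t - W_star p) \<and>
              sVt (mk u c p x yy th tha) t = Vdc_star p + kp_dc p * sdW (mk u c p x yy th tha) t + kw_dc p * (sW (mk u c p x yy th tha) t - W_star p)"
        by (cases u) (simp_all add: mk_def wx_def wd_def vx_def vd_def bd_def algebra_simps)
      show "if ac_connected c
          then sPac (mk u c p x yy th tha) t = b_ac p * (stheta (mk u c p x yy th tha) t - stheta_ac (mk u c p x yy th tha) t) \<and>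
               (stheta_ac (mk u c p x yy th tha) has_real_derivative omega_star p + k_ac p * sPac (mk u c p x yy th tha) t) (at t within {0..})
          else sPac (mk u c p x yy th tha) t = 0"
        using ac C nac by (simp add: mk_def)
      show "if dc_connected c
          then sPdc (mk u c p x yy th tha) t = g_dc p * (sVdc (mk u c p x yy th tha) t - sVt (mk u c p x yy th tha) t) \<and>
               sVdc (mk u c p x yy th tha) t = Vdc_star p - k_dc p * sPdc (mk u c p x yy th tha) t
          else sPdc (mk u c p x yy th tha) t = 0"
        using DC NDC by (simp add: mk_def)
    qed
  qed
qed

lemma lin_solve:
  fixes y a r :: real
  assumes "y = -a*y - r"
  shows "y*(1+a) = -r"
proof -
  have "y + a*y = (-a*y - r) + a*y" using assms by (rule arg_cong[where f="\<lambda>z. z + a*y"])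
  thus ?thesis by (simp add: algebra_simps)
qed

lemma alg:
  assumes P: "posp p" and cl: "closed_loop u c p s" and t: "t \<ge> 0"
  shows "sPac s t = b_ac p * state_d c s t \<and>
    sdW s t = -ah c p * state_x p s t - bd u c p * state_d c s t \<and>
    somega s t = omega_star p + wx u c p * state_x p s t + wd u c p * state_d c s t \<and>
    sVt s t = Vdc_star p + vx c p * state_x p s t + vd u c p * state_d c s t"
proof -
  note all = cl[unfolded closed_loop_def, THEN spec[of _ t], THEN mp, OF t]
  note E1 = all[THEN conjunct2, THEN conjunct1]
  note CL = all[THEN conjunct2, THEN conjunct2, THEN conjunct2, THEN conjunct1]
  note ACf = all[THEN conjunct2, THEN conjunct2, THEN conjunct2, THEN conjunct2, THEN conjunct1]
  note DCf = all[THEN conjunct2, THEN conjunct2, THEN conjunct2, THEN conjunct2, THEN conjunct2]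
  define X where "X = state_x p s t"
  define Dd where "Dd = state_d c s t"
  have X: "sW s t - W_star p = X" by (simp add: X_def state_x_def)
  have Pac: "sPac s t = b_ac p * Dd"
    using ACf by (cases "ac_connected c") (auto simp: Dd_def state_d_def)
  have e: "ee c p > 0" using coef_pos[OF P] by auto
  have Pdc: "sPdc s t = GG c p * (Vdc_star p - sVt s t)"
  proof (cases "dc_connected c")
    case True
    have g: "g_dc p > 0" "k_dc p \<ge> 0" using P by (auto simp: posp_def)
    have d: "1 + g_dc p * k_dc p > 0" using g by (smt (verit) mult_nonneg_nonneg)
    from DCf have AB: "sPdc s t = g_dc p * (sVdc s t - sVt s t) \<and> sVdc s t = Vdc_star p - k_dc p * sPdc s t"
      unfolding if_P[OF True] .
    have "sPdc s t = g_dc p * ((Vdc_star p - k_dc p * sPdc s t) - sVt s t)"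
      by (subst AB[THEN conjunct2, symmetric]) (rule AB[THEN conjunct1])
    hence "sPdc s t * (1 + g_dc p * k_dc p) = g_dc p * (Vdc_star p - sVt s t)" by (simp add: algebra_simps)
    hence "sPdc s t = g_dc p * (Vdc_star p - sVt s t) / (1 + g_dc p * k_dc p)"
      using d by (simp add: nonzero_eq_divide_eq)
    thus ?thesis using True by (simp add: GG_def)
  next
    case False thus ?thesis using DCf by (simp add: GG_def)
  qed
  show ?thesis
  proof (cases u)
    case HybridDroop
    have om: "somega s t = omega_star p + kp_ac p * (0 - sPac s t) + kw_ac p * X"
      and vt: "sVt s t = Vdc_star p + kp_dc p * sPdc s t + kw_dc p * X"
      using CL HybridDroop X by auto
    have h5: "sPdc s t = -(GG c p * kp_dc p) * sPdc s t - GG c p * kw_dc p * X"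
    proof -
      have "sPdc s t = GG c p * (Vdc_star p - sVt s t)" by (rule Pdc)
      also have "\<dots> = -(GG c p * kp_dc p) * sPdc s t - GG c p * kw_dc p * X"
        unfolding vt by (simp add: algebra_simps)
      finally show ?thesis .
    qed
    have "sPdc s t * ee c p = - (GG c p * kw_dc p) * X"
      using lin_solve[OF h5] by (simp add: ee_def)
    hence "sPdc s t = - (GG c p * kw_dc p) * X / ee c p" using e by (simp add: field_simps)
    hence pd: "sPdc s t = - ah c p * X" by (simp add: ah_def)
    show ?thesis using HybridDroop E1 om vt pd Pac
      by (simp add: X_def[symmetric] Dd_def[symmetric] bd_def wx_def wd_def vx_def vd_def algebra_simps)
  next
    case EnergyPD
    have om: "somega s t = omega_star p + kp_ac p * sdW s t + kw_ac p * X"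
      and vt: "sVt s t = Vdc_star p + kp_dc p * sdW s t + kw_dc p * X"
      using CL EnergyPD X by auto
    have h2: "Vdc_star p - sVt s t = -(kp_dc p * sdW s t) - kw_dc p * X" using vt by simp
    have h3: "sPdc s t = -(GG c p * kp_dc p) * sdW s t - GG c p * kw_dc p * X"
      unfolding Pdc h2 by (simp add: algebra_simps)
    have h4: "sdW s t = sPdc s t - b_ac p * Dd" using E1 Pac by simp
    have h5: "sdW s t = -(GG c p * kp_dc p) * sdW s t - (GG c p * kw_dc p * X + b_ac p * Dd)"
    proof -
      have "sdW s t = sPdc s t - b_ac p * Dd" by (rule h4)
      also have "\<dots> = -(GG c p * kp_dc p) * sdW s t - (GG c p * kw_dc p * X + b_ac p * Dd)"
        unfolding h3 by (simp add: algebra_simps)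
      finally show ?thesis .
    qed
    have "sdW s t * ee c p = - (GG c p * kw_dc p * X + b_ac p * Dd)"
      using lin_solve[OF h5] by (simp add: ee_def)
    hence "sdW s t * ee c p = - (GG c p * kw_dc p) * X - b_ac p * Dd" by simp
    hence "sdW s t = (- (GG c p * kw_dc p) * X - b_ac p * Dd) / ee c p" using e by (simp add: nonzero_eq_divide_eq)
    hence y: "sdW s t = - ah c p * X - bd u c p * Dd" using EnergyPD by (simp add: ah_def bd_def diff_divide_distrib)
    show ?thesis unfolding X_def[symmetric] Dd_def[symmetric] om vt y Pac
      by (simp add: EnergyPD bd_def wx_def wd_def vx_def vd_def algebra_simps)
  qed
qed

lemma ode_x:
  assumes P: "posp p" and cl: "closed_loop u c p s" and t: "t \<ge> 0"
  shows "(state_x p s has_real_derivative (-ah c p * state_x p s t - bd u c p * state_d c s t)) (at t within {0..})"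
proof -
  note all = cl[unfolded closed_loop_def, THEN spec[of _ t], THEN mp, OF t]
  have "(sW s has_real_derivative sdW s t) (at t within {0..})" by (rule all[THEN conjunct1])
  hence "((\<lambda>t. sW s t - W_star p) has_real_derivative sdW s t - 0) (at t within {0..})"
    by (intro DERIV_diff DERIV_const)
  thus ?thesis using alg[OF P cl t] unfolding state_x_def[abs_def] by simp
qed

lemma ode_d:
  assumes P: "posp p" and cl: "closed_loop u c p s" and t: "t \<ge> 0" and ac: "ac_connected c"
  shows "(state_d c s has_real_derivative (wx u c p * state_x p s t + (wd u c p - k_ac p * b_ac p) * state_d c s t)) (at t within {0..})"
proof -
  note all = cl[unfolded closed_loop_def, THEN spec[of _ t], THEN mp, OF t]
  have a: "(stheta s has_real_derivative somega s t) (at t within {0..})" by (rule all[THEN conjunct2, THEN conjunct2, THEN conjunct1])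
  have b: "(stheta_ac s has_real_derivative (omega_star p + k_ac p * sPac s t)) (at t within {0..})"
  proof -
    from all[THEN conjunct2, THEN conjunct2, THEN conjunct2, THEN conjunct2, THEN conjunct1]
    have "sPac s t = b_ac p * (stheta s t - stheta_ac s t) \<and>
         (stheta_ac s has_real_derivative (omega_star p + k_ac p * sPac s t)) (at t within {0..})"
      unfolding if_P[OF ac] .
    thus ?thesis by (rule conjunct2)
  qed
  have "((\<lambda>t. stheta s t - stheta_ac s t) has_real_derivative somega s t - (omega_star p + k_ac p * sPac s t)) (at t within {0..})"
    by (rule DERIV_diff[OF a b])
  moreover have "state_d c s = (\<lambda>t. stheta s t - stheta_ac s t)" using ac by (simp add: state_d_def[abs_def])
  ultimately show ?thesis using alg[OF P cl t] by (simp add: algebra_simps)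
qed

lemma stab_from_sq:
  fixes x y :: "real \<Rightarrow> real"
  assumes K: "K > 0" and c: "c > 0"
    and bnd: "\<And>t. t \<ge> 0 \<Longrightarrow> (x t)^2 + (y t)^2 \<le> K*((x 0)^2+(y 0)^2)*exp(-c*t)"
    and t: "t \<ge> 0"
  shows "\<bar>x t\<bar> + \<bar>y t\<bar> \<le> sqrt(2*K) * (\<bar>x 0\<bar> + \<bar>y 0\<bar>) * exp(-(c/2)*t)"
proof (rule power2_le_imp_le)
  show "0 \<le> sqrt(2*K) * (\<bar>x 0\<bar> + \<bar>y 0\<bar>) * exp(-(c/2)*t)" using K by simp
  have s1: "(\<bar>x t\<bar> + \<bar>y t\<bar>)^2 \<le> 2*((x t)^2 + (y t)^2)"
  proof -
    have "0 \<le> (\<bar>x t\<bar> - \<bar>y t\<bar>)^2" by simp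
    thus ?thesis by (simp add: power2_eq_square algebra_simps)
  qed
  have s2: "(x 0)^2 + (y 0)^2 \<le> (\<bar>x 0\<bar> + \<bar>y 0\<bar>)^2"
    by (simp add: power2_eq_square algebra_simps)
  have "(\<bar>x t\<bar> + \<bar>y t\<bar>)^2 \<le> 2*(K*((x 0)^2+(y 0)^2)*exp(-c*t))"
  proof -
    have b2: "2*((x t)^2 + (y t)^2) \<le> 2*(K*((x 0)^2+(y 0)^2)*exp(-c*t))" using bnd[OF t] by simp
    show ?thesis using s1 b2 by (rule order_trans)
  qed
  also have "\<dots> \<le> 2*(K*(\<bar>x 0\<bar> + \<bar>y 0\<bar>)^2*exp(-c*t))"
    using s2 K by (intro mult_left_mono mult_right_mono) auto
  also have "\<dots> = (sqrt(2*K) * (\<bar>x 0\<bar> + \<bar>y 0\<bar>) * exp(-(c/2)*t))^2"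
  proof -
    have "exp(-(c/2)*t)^2 = exp(-c*t)" by (simp add: power2_eq_square exp_add[symmetric])
    moreover have "sqrt(2*K)^2 = 2*K" using K by simp
    ultimately show ?thesis by (simp add: power_mult_distrib)
  qed
  finally show "(\<bar>x t\<bar> + \<bar>y t\<bar>)^2 \<le> (sqrt(2*K) * (\<bar>x 0\<bar> + \<bar>y 0\<bar>) * exp(-(c/2)*t))^2" .
qed

lemma exp_decay_lim:
  assumes "c > 0"
  shows "((\<lambda>t::real. C * exp(-(c/2)*t)) \<longlongrightarrow> 0) at_top"
proof -
  have "LIM t at_top. (-(c/2)) * t :> at_bot"
    using assms by (intro filterlim_tendsto_neg_mult_at_bot[OF tendsto_const _ filterlim_ident]) simp
  hence "((\<lambda>t. exp(-(c/2)*t)) \<longlongrightarrow> 0) at_top"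
    by (rule filterlim_compose[OF exp_at_bot])
  thus ?thesis using tendsto_mult_right_zero by blast
qed

theorem theorem1:
  fixes u :: control and c :: config and p :: mmc_params
  assumes "kp_ac p > 0" and "kp_dc p > 0" and "kw_ac p > 0" and "kw_dc p > 0"
    and "u = HybridDroop \<Longrightarrow> kw_ac p > kp_ac p"
    and "b_ac p > 0" and "k_ac p \<ge> 0" and "g_dc p > 0" and "k_dc p \<ge> 0"
  shows "asymptotically_stable u c p \<and>
    (\<forall>s. closed_loop u c p s \<longrightarrow>
       (sW s \<longlongrightarrow> W_star p) at_top \<and>
       (somega s \<longlongrightarrow> omega_star p) at_top \<and>
       (sVt s \<longlongrightarrow> Vdc_star p) at_top)"
proof -
  have P: "posp p" using assms by (simp add: posp_def)
  have cp: "ah c p \<ge> 0" "bd u c p > 0" using coef_pos[OF P] by auto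
  define a21 where "a21 = (if ac_connected c then wx u c p else 0)"
  define a22 where "a22 = (if ac_connected c then wd u c p - k_ac p * b_ac p else -1)"
  have T: "- ah c p + a22 < 0"
    using Tneg[OF P, of c u] cp by (simp add: a22_def)
  have D: "(- ah c p) * a22 - (- bd u c p) * a21 > 0"
  proof (cases "ac_connected c")
    case True thus ?thesis using Dpos[OF P, of c u] by (simp add: a21_def a22_def)
  next
    case False
    hence "dc_connected c" by (cases c) (auto simp: ac_connected_def dc_connected_def)
    hence "ah c p > 0" using coef_pos[OF P] by auto
    thus ?thesis using False by (simp add: a21_def a22_def)
  qed
  obtain K cc where K: "K > 0" and cc: "cc > 0" and dec: "\<And>x y. (\<forall>t\<ge>0. (x has_real_derivative ((- ah c p) * x t + (- bd u c p) * y t)) (at t within {0..}) \<and>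
            (y has_real_derivative (a21 * x t + a22 * y t)) (at t within {0..})) \<Longrightarrow>
         (\<forall>t\<ge>0. (x t)^2 + (y t)^2 \<le> K * ((x 0)^2 + (y 0)^2) * exp (-cc*t))"
    using lin2_decay[OF T D] by blast
  have odes: "\<forall>t\<ge>0. (state_x p s has_real_derivative ((- ah c p) * state_x p s t + (- bd u c p) * state_d c s t)) (at t within {0..}) \<and>
            (state_d c s has_real_derivative (a21 * state_x p s t + a22 * state_d c s t)) (at t within {0..})"
    if cl: "closed_loop u c p s" for s
  proof (intro allI impI conjI)
    fix t :: real assume t: "t \<ge> 0"
    show "(state_x p s has_real_derivative ((- ah c p) * state_x p s t + (- bd u c p) * state_d c s t)) (at t within {0..})"
      using ode_x[OF P cl t] by simp
    show "(state_d c s has_real_derivative (a21 * state_x p s t + a22 * state_d c s t)) (at t within {0..})"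
    proof (cases "ac_connected c")
      case True thus ?thesis using ode_d[OF P cl t True] by (simp add: a21_def a22_def)
    next
      case False
      hence z: "state_d c s = (\<lambda>t. 0)" by (simp add: state_d_def[abs_def])
      show ?thesis using False by (simp add: z a21_def a22_def)
    qed
  qed
  define L where "L = sqrt (2*K)"
  have Lpos: "L > 0" using K by (simp add: L_def)
  have bound: "state_norm c p s t \<le> L * state_norm c p s 0 * exp(-(cc/2)*t)"
    if cl: "closed_loop u c p s" and t: "t \<ge> 0" for s t
    using stab_from_sq[OF K cc, of "state_x p s" "state_d c s", OF _ t] dec[OF odes[OF cl]]
    unfolding state_norm_def L_def by blast
  have conv: "(state_norm c p s \<longlongrightarrow> 0) at_top" if cl: "closed_loop u c p s" for s
  proof (rule tendsto_sandwich[where f="\<lambda>_. 0" and h="\<lambda>t. L * state_norm c p s 0 * exp(-(cc/2)*t)"])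
    show "\<forall>\<^sub>F t in at_top. 0 \<le> state_norm c p s t" by (simp add: state_norm_def)
    show "\<forall>\<^sub>F t in at_top. state_norm c p s t \<le> L * state_norm c p s 0 * exp(-(cc/2)*t)"
      using eventually_ge_at_top[of 0] by eventually_elim (rule bound[OF cl])
    show "((\<lambda>t. L * state_norm c p s 0 * exp(-(cc/2)*t)) \<longlongrightarrow> 0) at_top"
      by (rule exp_decay_lim[OF cc])
  qed simp
  have xd0: "(state_x p s \<longlongrightarrow> 0) at_top \<and> (state_d c s \<longlongrightarrow> 0) at_top" if cl: "closed_loop u c p s" for s
  proof -
    have n: "(state_norm c p s \<longlongrightarrow> 0) at_top" by (rule conv[OF cl])
    have "((\<lambda>t. \<bar>state_x p s t\<bar>) \<longlongrightarrow> 0) at_top"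
      by (rule tendsto_sandwich[OF _ _ tendsto_const n]) (auto simp: state_norm_def)
    moreover have "((\<lambda>t. \<bar>state_d c s t\<bar>) \<longlongrightarrow> 0) at_top"
      by (rule tendsto_sandwich[OF _ _ tendsto_const n]) (auto simp: state_norm_def)
    ultimately show ?thesis by (simp add: tendsto_rabs_zero_iff)
  qed
  have stab: "\<forall>\<epsilon>>0. \<exists>\<delta>>0. \<forall>s. closed_loop u c p s \<longrightarrow> state_norm c p s 0 < \<delta> \<longrightarrow>
                     (\<forall>t\<ge>0. state_norm c p s t < \<epsilon>)"
  proof (intro allI impI)
    fix \<epsilon> :: real assume e: "\<epsilon> > 0"
    show "\<exists>\<delta>>0. \<forall>s. closed_loop u c p s \<longrightarrow> state_norm c p s 0 < \<delta> \<longrightarrow> (\<forall>t\<ge>0. state_norm c p s t < \<epsilon>)"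
    proof (intro exI[of _ "\<epsilon>/L"] conjI allI impI)
      show "\<epsilon>/L > 0" using e Lpos by simp
      fix s t assume cl: "closed_loop u c p s" and n0: "state_norm c p s 0 < \<epsilon>/L" and t: "t \<ge> (0::real)"
      have n0': "state_norm c p s 0 \<ge> 0" by (simp add: state_norm_def)
      have "exp(-(cc/2)*t) \<le> 1" using cc t by simp
      hence "L * state_norm c p s 0 * exp(-(cc/2)*t) \<le> L * state_norm c p s 0"
        using Lpos n0' by (simp add: mult_left_le)
      also have "\<dots> < L * (\<epsilon>/L)" using n0 Lpos by (intro mult_strict_left_mono) auto
      also have "\<dots> = \<epsilon>" using Lpos by simp
      finally show "state_norm c p s t < \<epsilon>" using bound[OF cl t] by linarith
    qed
  qed
  have ex: "\<forall>x0 d0. \<exists>s. closed_loop u c p s \<and> state_x p s 0 = x0 \<and>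
                  state_d c s 0 = (if ac_connected c then d0 else 0)"
  proof (intro allI)
    fix x0 d0 :: real
    show "\<exists>s. closed_loop u c p s \<and> state_x p s 0 = x0 \<and> state_d c s 0 = (if ac_connected c then d0 else 0)"
    proof (cases "ac_connected c")
      case True
      define a11 where "a11 = - ah c p"
      define a12 where "a12 = - bd u c p"
      define DD where "DD = a11 * a22 - a12 * a21"
      have DD: "DD > 0" using D by (simp add: DD_def a11_def a12_def)
      obtain x y where x0: "x 0 = x0" and y0: "y 0 = d0"
        and dx: "\<And>t. (x has_real_derivative (a11 * x t + a12 * y t)) (at t)"
        and dy: "\<And>t. (y has_real_derivative (a21 * x t + a22 * y t)) (at t)"
        using lin2_exists[of x0 d0 a11 a12 a21 a22] by blast
      define tha where "tha t = omega_star p * t + k_ac p * b_ac p * ((- a21/DD) * x t + (a11/DD) * y t)" for t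
      define th where "th t = y t + tha t" for t
      have dtha: "(tha has_real_derivative (omega_star p + k_ac p * (b_ac p * y t))) (at t)" for t
      proof -
        have "(tha has_real_derivative (omega_star p * 1 + k_ac p * b_ac p * ((- a21/DD) * (a11 * x t + a12 * y t) + (a11/DD) * (a21 * x t + a22 * y t)))) (at t)"
          unfolding tha_def[abs_def] by (rule derivative_eq_intros dx dy refl)+ (simp add: algebra_simps)
        moreover have "(- a21/DD) * (a11 * x t + a12 * y t) + (a11/DD) * (a21 * x t + a22 * y t) = y t"
        proof -
          have num: "(-a21)*(a11 * x t + a12 * y t) + a11*(a21 * x t + a22 * y t) = DD * y t"
            unfolding DD_def by (simp add: algebra_simps)
          have "(- a21/DD) * (a11 * x t + a12 * y t) + (a11/DD) * (a21 * x t + a22 * y t)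
              = ((-a21)*(a11 * x t + a12 * y t) + a11*(a21 * x t + a22 * y t)) / DD"
            by (simp add: add_divide_distrib diff_divide_distrib)
          also have "\<dots> = y t" unfolding num using DD by simp
          finally show ?thesis .
        qed
        ultimately show ?thesis by (simp add: mult.assoc)
      qed
      have dth: "(th has_real_derivative (omega_star p + wx u c p * x t + wd u c p * y t)) (at t)" for t
      proof -
        have "(th has_real_derivative (a21 * x t + a22 * y t) + (omega_star p + k_ac p * (b_ac p * y t))) (at t)"
          unfolding th_def[abs_def] by (rule DERIV_add[OF dy dtha])
        thus ?thesis using True by (simp add: a21_def a22_def algebra_simps)
      qed
      have dx': "(x has_real_derivative (-ah c p * x t - bd u c p * y t)) (at t)" for t
        using dx[of t] by (simp add: a11_def a12_def)
      have cl: "closed_loop u c p (mk u c p x y th tha)"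
        by (rule check_cl[OF P dx' dth]) (use True dtha in \<open>auto simp: th_def\<close>)
      show ?thesis
        by (intro exI[of _ "mk u c p x y th tha"] conjI cl)
           (simp_all add: mk_def state_x_def state_d_def True th_def x0 y0)
    next
      case False
      hence dc: "dc_connected c" by (cases c) (auto simp: ac_connected_def dc_connected_def)
      hence ah: "ah c p > 0" using coef_pos[OF P] by auto
      obtain x y where x0: "x 0 = x0"
        and dx: "\<And>t. (x has_real_derivative ((- ah c p) * x t + 0 * y t)) (at t)"
        using lin2_exists[of x0 0 "- ah c p" 0 0 "-1"] by blast
      define th where "th t = omega_star p * t - (wx u c p / ah c p) * x t" for t
      have dth: "(th has_real_derivative (omega_star p + wx u c p * x t + wd u c p * 0)) (at t)" for t
      proof -
        have "(th has_real_derivative (omega_star p * 1 - (wx u c p / ah c p) * ((- ah c p) * x t + 0 * y t))) (at t)"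
          unfolding th_def[abs_def] by (rule derivative_eq_intros dx refl)+ (simp add: algebra_simps)
        thus ?thesis using ah by simp
      qed
      have dx': "(x has_real_derivative (-ah c p * x t - bd u c p * 0)) (at t)" for t
        using dx[of t] by simp
      have cl: "closed_loop u c p (mk u c p x (\<lambda>_. 0) th (\<lambda>_. 0))"
        by (rule check_cl[OF P dx' dth]) (use False in auto)
      show ?thesis
        by (intro exI[of _ "mk u c p x (\<lambda>_. 0) th (\<lambda>_. 0)"] conjI cl)
           (simp_all add: mk_def state_x_def state_d_def False x0)
    qed
  qed
  have lims: "(sW s \<longlongrightarrow> W_star p) at_top \<and> (somega s \<longlongrightarrow> omega_star p) at_top \<and> (sVt s \<longlongrightarrow> Vdc_star p) at_top"
    if cl: "closed_loop u c p s" for s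
  proof -
    have x: "(state_x p s \<longlongrightarrow> 0) at_top" and d: "(state_d c s \<longlongrightarrow> 0) at_top" using xd0[OF cl] by auto
    have "((\<lambda>t. W_star p + state_x p s t) \<longlongrightarrow> W_star p + 0) at_top"
      by (intro tendsto_intros x)
    moreover have "sW s = (\<lambda>t. W_star p + state_x p s t)" by (simp add: state_x_def[abs_def])
    ultimately have 1: "(sW s \<longlongrightarrow> W_star p) at_top" by simp
    have ev: "\<forall>\<^sub>F t in at_top. omega_star p + wx u c p * state_x p s t + wd u c p * state_d c s t = somega s t \<and>
               Vdc_star p + vx c p * state_x p s t + vd u c p * state_d c s t = sVt s t"
      using eventually_ge_at_top[of 0] by eventually_elim (use alg[OF P cl] in auto)
    have "((\<lambda>t. omega_star p + wx u c p * state_x p s t + wd u c p * state_d c s t) \<longlongrightarrow>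
          omega_star p + wx u c p * 0 + wd u c p * 0) at_top"
      by (intro tendsto_intros x d)
    hence l2: "((\<lambda>t. omega_star p + wx u c p * state_x p s t + wd u c p * state_d c s t) \<longlongrightarrow> omega_star p) at_top" by simp
    have ev2: "\<forall>\<^sub>F t in at_top. omega_star p + wx u c p * state_x p s t + wd u c p * state_d c s t = somega s t"
      using ev by (rule eventually_mono) auto
    have 2: "(somega s \<longlongrightarrow> omega_star p) at_top" using tendsto_cong[OF ev2] l2 by simp
    have "((\<lambda>t. Vdc_star p + vx c p * state_x p s t + vd u c p * state_d c s t) \<longlongrightarrow>
          Vdc_star p + vx c p * 0 + vd u c p * 0) at_top"
      by (intro tendsto_intros x d)
    hence l3: "((\<lambda>t. Vdc_star p + vx c p * state_x p s t + vd u c p * state_d c s t) \<longlongrightarrow> Vdc_star p) at_top" by simp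
    have ev3: "\<forall>\<^sub>F t in at_top. Vdc_star p + vx c p * state_x p s t + vd u c p * state_d c s t = sVt s t"
      using ev by (rule eventually_mono) auto
    have 3: "(sVt s \<longlongrightarrow> Vdc_star p) at_top" using tendsto_cong[OF ev3] l3 by simp
    show ?thesis using 1 2 3 by blast
  qed
  show ?thesis unfolding asymptotically_stable_def using ex stab conv lims by blast
qed

end
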